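(* Let $(M,\Sigma)$ be a measurable space, $r\ge1$, and $\mu_1,\dots,\mu_r$ non-atomic countably additive finite measures on $\Sigma$; put $\mu=\frac1r\sum_{i=1}^r\mu_i$. For $k\ge1$ let $t(k)=k\bmod r$ if this is nonzero and $t(k)=r$ otherwise. Let $(H_k)_{k\ge1}$ be a sequence of measurable sets such that for every $k$: $H_k\subseteq M\setminus\bigcup_{i=1}^{k-1}H_i$, $H_k$ admits a strong solution (a partition $H_k=F_1\sqcup\dots\sqcup F_r$ with $\mu_i(F_i)\ge\mu_i(F_j)$ for all $i,j$), and $\mu_{t(k)}(H_k)\ge 2^{-(r-1)}\mu_{t(k)}\bigl(M\setminus\bigcup_{i=1}^{k-1}H_i\bigr)$. For $s\ge0$ let $M_s=M\setminus\bigcup_{i=1}^{sr}H_i$ (so $M_0=M$). Then for every $s\ge1$, $$\mu(M_s)\le\frac{2^{r-1}-1}{2^{r-1}}\,\mu(M_{s-1}).$$ *)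

theory Defs
  imports "HOL-Analysis.Analysis"
begin

definition nonatomic :: "'a measure \<Rightarrow> bool" where
  "nonatomic m \<longleftrightarrow> (\<forall>A\<in>sets m. 0 < emeasure m A \<longrightarrow>
      (\<exists>B\<in>sets m. B \<subseteq> A \<and> 0 < emeasure m B \<and> emeasure m B < emeasure m A))"

definition strong_solution :: "'a measure \<Rightarrow> (nat \<Rightarrow> 'a measure) \<Rightarrow> nat \<Rightarrow> 'a set \<Rightarrow> bool" where
  "strong_solution N mu r H \<longleftrightarrow> (\<exists>F :: nat \<Rightarrow> 'a set.
      (\<forall>i\<in>{1..r}. F i \<in> sets N) \<and> disjoint_family_on F {1..r} \<and>
      (\<Union>i\<in>{1..r}. F i) = H \<and>
      (\<forall>i\<in>{1..r}. \<forall>j\<in>{1..r}. measure (mu i) (F i) \<ge> measure (mu i) (F j)))"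

definition tidx :: "nat \<Rightarrow> nat \<Rightarrow> nat" where
  "tidx r k = (if k mod r \<noteq> 0 then k mod r else r)"

end

theory Submission
  imports Defs
begin

theorem lemma4:
  fixes N :: "'a measure" and mu :: "nat \<Rightarrow> 'a measure" and r :: nat
    and H :: "nat \<Rightarrow> 'a set" and s :: nat
  assumes r: "r \<ge> 1"
    and sets_mu: "\<And>i. i \<in> {1..r} \<Longrightarrow> sets (mu i) = sets N"
    and fin: "\<And>i. i \<in> {1..r} \<Longrightarrow> finite_measure (mu i)"
    and na: "\<And>i. i \<in> {1..r} \<Longrightarrow> nonatomic (mu i)"
    and H_meas: "\<And>k. k \<ge> 1 \<Longrightarrow> H k \<in> sets N"
    and H_sub: "\<And>k. k \<ge> 1 \<Longrightarrow> H k \<subseteq> space N - (\<Union>i\<in>{1..<k}. H i)"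
    and H_sol: "\<And>k. k \<ge> 1 \<Longrightarrow> strong_solution N mu r (H k)"
    and H_big: "\<And>k. k \<ge> 1 \<Longrightarrow>
        measure (mu (tidx r k)) (H k) \<ge>
          (1 / 2 ^ (r - 1)) * measure (mu (tidx r k)) (space N - (\<Union>i\<in>{1..<k}. H i))"
    and s: "s \<ge> 1"
  shows "(1 / real r) * (\<Sum>i=1..r. measure (mu i) (space N - (\<Union>j\<in>{1..s*r}. H j)))
       \<le> ((2 ^ (r - 1) - 1) / 2 ^ (r - 1)) *
         ((1 / real r) * (\<Sum>i=1..r. measure (mu i) (space N - (\<Union>j\<in>{1..(s-1)*r}. H j))))"
proof -
  define M where "M k = space N - (\<Union>j\<in>{1..k}. H j)" for k
  define c :: real where "c = 1 / 2 ^ (r - 1)"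
  have Mmeas: "M k \<in> sets N" for k
    unfolding M_def using H_meas by (intro sets.Diff sets.top sets.finite_UN) auto
  have Manti: "k \<le> l \<Longrightarrow> M l \<subseteq> M k" for k l
    unfolding M_def by auto
  have step: "measure (mu i) (M k) \<le> (1 - c) * measure (mu i) (M (k - 1))"
    if i: "i \<in> {1..r}" and k: "k \<ge> 1" and t: "tidx r k = i" for i k
  proof -
    interpret finite_measure "mu i" using fin i by blast
    have sN: "sets (mu i) = sets N" using sets_mu i by blast
    have eq1: "space N - (\<Union>j\<in>{1..<k}. H j) = M (k - 1)"
    proof -
      have "{1..<k} = {1..k-1}" using k by auto
      then show ?thesis unfolding M_def by simp
    qed
    have eq2: "M k = M (k - 1) - H k"
    proof -
      have "{1..k} = insert k {1..k-1}" using k by auto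
      then show ?thesis unfolding M_def by auto
    qed
    have sub: "H k \<subseteq> M (k - 1)" using H_sub[OF k] eq1 by simp
    have "measure (mu i) (M k) = measure (mu i) (M (k - 1)) - measure (mu i) (H k)"
      unfolding eq2 using sub Mmeas H_meas[OF k] sN by (intro finite_measure_Diff) auto
    moreover have "measure (mu i) (H k) \<ge> c * measure (mu i) (M (k - 1))"
      using H_big[OF k] t eq1 c_def by simp
    ultimately show ?thesis by (simp add: algebra_simps)
  qed
  have c01: "1 - c \<ge> 0" unfolding c_def by simp
  have each: "measure (mu i) (M (s*r)) \<le> (1 - c) * measure (mu i) (M ((s-1)*r))"
    if i: "i \<in> {1..r}" for i
  proof -
    interpret finite_measure "mu i" using fin i by blast
    have sN: "sets (mu i) = sets N" using sets_mu i by blast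
    define k where "k = (s-1)*r + i"
    have k1: "k \<ge> 1" using i k_def by auto
    have t: "tidx r k = i"
    proof (cases "i = r")
      case True
      then show ?thesis unfolding tidx_def k_def by simp
    next
      case False
      then have "i < r" using i by auto
      then show ?thesis unfolding tidx_def k_def using i by simp
    qed
    have ks: "k \<le> s * r"
    proof -
      obtain s' where "s = Suc s'" using s by (cases s) auto
      then show ?thesis using i unfolding k_def by auto
    qed
    have "measure (mu i) (M (s*r)) \<le> measure (mu i) (M k)"
      using Manti[OF ks] Mmeas sN by (intro finite_measure_mono) auto
    also have "\<dots> \<le> (1 - c) * measure (mu i) (M (k - 1))" using step[OF i k1 t] .
    also have "\<dots> \<le> (1 - c) * measure (mu i) (M ((s-1)*r))"
    proof -
      have "(s-1)*r \<le> k - 1" using k_def i by auto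
      then have "M (k-1) \<subseteq> M ((s-1)*r)" by (rule Manti)
      then show ?thesis using c01 Mmeas sN
        by (intro mult_left_mono finite_measure_mono) auto
    qed
    finally show ?thesis .
  qed
  have "(\<Sum>i=1..r. measure (mu i) (M (s*r))) \<le> (\<Sum>i=1..r. (1 - c) * measure (mu i) (M ((s-1)*r)))"
    using each by (intro sum_mono) auto
  also have "\<dots> = (1 - c) * (\<Sum>i=1..r. measure (mu i) (M ((s-1)*r)))"
    by (simp add: sum_distrib_left)
  finally have main: "(\<Sum>i=1..r. measure (mu i) (M (s*r))) \<le> (1 - c) * (\<Sum>i=1..r. measure (mu i) (M ((s-1)*r)))" .
  have ceq: "((2 ^ (r - 1) - 1) / 2 ^ (r - 1) :: real) = 1 - c"
    unfolding c_def by (simp add: field_simps)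
  show ?thesis
    unfolding ceq M_def[symmetric] using main r
    by (simp add: divide_right_mono mult.commute mult.left_commute)
qed

end
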